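(* Consider the consistent-read asynchronous iteration defined in the context with step size $\beta=1$, an arbitrary deterministic starting vector $x_0$, a nonnegative integer $\tau$, and deterministic delay indices $k(j)$ satisfying $j-\tau\le k(j)\le j$ for all $j$. Let $\rho=\frac1n\|A\|_\infty=\max_{l}\frac1n\sum_{r=1}^n|A_{lr}|$, and suppose $2\rho\tau<1$. Set $\nu_\tau=1-2\rho\tau$. Then: (a) For every integer $m\ge \frac{\log(1/2)}{\log(1-\lambda_{\max}/n)}$, \[E_m\le\Big(1-\frac{\nu_\tau}{2\kappa}\Big)E_0.\] (b) Let $T_0=\big\lceil \frac{\log(1/2)}{\log(1-\lambda_{\max}/n)}\big\rceil$, $T=T_0+\tau$, and \[\chi=\frac{\rho\tau^2\lambda_{\max}(1-\lambda_{\max}/n)^{-2\tau}}{n}.\] Then for every integer $r\ge1$ and every $m\ge rT$, \[E_m\le\Big(1-\frac{\nu_\tau}{2\kappa}\Big)\Big(1-\frac{\nu_\tau(1-\lambda_{\max}/n)^{\tau}}{2\kappa}+\chi\Big)^{r-1}E_0.\]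
   Context: Let $n\ge2$ and let $A\in\mathbb{R}^{n\times n}$ be symmetric positive definite with all diagonal entries equal to $1$; let $b\in\mathbb{R}^n$ and $x^\star=A^{-1}b$. Let $\lambda_{\min},\lambda_{\max}$ be the smallest and largest eigenvalues of $A$ and $\kappa=\lambda_{\max}/\lambda_{\min}$. Write $(x,y)_A=y^TAx$ and $\|x\|_A=\sqrt{(x,x)_A}$; $e^{(1)},\dots,e^{(n)}$ are the standard basis vectors. Consistent-read iteration: let $d_0,d_1,\dots$ be i.i.d. random vectors, each uniformly distributed on $\{e^{(1)},\dots,e^{(n)}\}$; let $\tau\ge0$ be an integer and $k(0),k(1),\dots$ deterministic integers (not depending on the $d_j$) with $j-\tau\le k(j)\le j$; given $x_0\in\mathbb{R}^n$ and a step size $\beta$, define for $j\ge0$ \[\gamma_j=(x^\star-x_{k(j)},d_j)_A,\qquad x_{j+1}=x_j+\beta\gamma_jd_j.\] (Note $\gamma_j=d_j^T(b-Ax_{k(j)})$.) Define $E_m=\mathbb{E}[\|x_m-x^\star\|_A^2]$. *)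

theory Defs
  imports "HOL-Analysis.Analysis" "HOL-Probability.Probability"
begin

definition mat_eigenvalues :: "real^'n^'n \<Rightarrow> real set" where
  "mat_eigenvalues A = {l. \<exists>v. v \<noteq> 0 \<and> A *v v = l *s v}"

definition lam_max :: "real^'n^'n \<Rightarrow> real" where
  "lam_max A = Max (mat_eigenvalues A)"

definition lam_min :: "real^'n^'n \<Rightarrow> real" where
  "lam_min A = Min (mat_eigenvalues A)"

definition spd :: "real^'n^'n \<Rightarrow> bool" where
  "spd A \<longleftrightarrow> transpose A = A \<and> (\<forall>x. x \<noteq> 0 \<longrightarrow> x \<bullet> (A *v x) > 0)"

definition A_inner :: "real^'n^'n \<Rightarrow> real^'n \<Rightarrow> real^'n \<Rightarrow> real" where
  "A_inner A x y = y \<bullet> (A *v x)"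

definition A_norm_sq :: "real^'n^'n \<Rightarrow> real^'n \<Rightarrow> real" where
  "A_norm_sq A x = A_inner A x x"

definition inf_norm :: "real^'n^'n \<Rightarrow> real" where
  "inf_norm A = Max (range (\<lambda>l. \<Sum>r\<in>UNIV. \<bar>A $ l $ r\<bar>))"

text \<open>History of the consistent-read iteration driven by the direction index sequence d
  (d j = i means d_j = e^(i)). hist m i = x_i for i \<le> m.\<close>
primrec cr_hist :: "real^'n^'n \<Rightarrow> real^'n \<Rightarrow> real^'n \<Rightarrow> real \<Rightarrow> (nat \<Rightarrow> nat)
                      \<Rightarrow> (nat \<Rightarrow> 'n) \<Rightarrow> nat \<Rightarrow> (nat \<Rightarrow> real^'n)" where
  "cr_hist A b x0 \<beta> k d 0 = (\<lambda>i. x0)"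
| "cr_hist A b x0 \<beta> k d (Suc j) =
     (let h = cr_hist A b x0 \<beta> k d j;
          e = axis (d j) (1::real);
          xstar = matrix_inv A *v b;
          \<gamma> = A_inner A (xstar - h (k j)) e
      in h(Suc j := h j + (\<beta> * \<gamma>) *\<^sub>R e))"

definition cr_iter :: "real^'n^'n \<Rightarrow> real^'n \<Rightarrow> real^'n \<Rightarrow> real \<Rightarrow> (nat \<Rightarrow> nat)
                      \<Rightarrow> (nat \<Rightarrow> 'n) \<Rightarrow> nat \<Rightarrow> real^'n" where
  "cr_iter A b x0 \<beta> k d m = cr_hist A b x0 \<beta> k d m m"

definition dir_pmf :: "nat \<Rightarrow> (nat \<Rightarrow> 'n::finite) pmf" where
  "dir_pmf m = Pi_pmf {..<m} undefined (\<lambda>_. pmf_of_set UNIV)"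

definition cr_err :: "real^'n^'n \<Rightarrow> real^'n \<Rightarrow> real^'n \<Rightarrow> real \<Rightarrow> (nat \<Rightarrow> nat) \<Rightarrow> nat \<Rightarrow> real" where
  "cr_err A b x0 \<beta> k m = measure_pmf.expectation (dir_pmf m)
      (\<lambda>d. A_norm_sq A (cr_iter A b x0 \<beta> k d m - matrix_inv A *v b))"

end

theory Submission
  imports Defs
begin
definition PS :: "nat \<Rightarrow> (nat \<Rightarrow> 'n::finite) set" where
  "PS N = PiE_dflt {..<N} undefined (\<lambda>_. UNIV)"

lemma PS_fin: "finite (PS N)"
  unfolding PS_def by (rule finite_PiE_dflt) auto

lemma PS_ne: "PS N \<noteq> {}"
  unfolding PS_def by simp

lemma PS_card: "card (PS N :: (nat \<Rightarrow> 'n::finite) set) = CARD('n) ^ N"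
  unfolding PS_def by (subst card_PiE_dflt) auto

lemma dir_pmf_eq: "dir_pmf N = pmf_of_set (PS N)"
  unfolding dir_pmf_def PS_def by (rule Pi_pmf_of_set) auto

lemma exp_dir: "measure_pmf.expectation (dir_pmf N) (f::(nat \<Rightarrow> 'n::finite)\<Rightarrow>real) = (\<Sum>d\<in>PS N. f d) / real CARD('n) ^ N"
proof -
  have "measure_pmf.expectation (pmf_of_set (PS N)) f = (\<Sum>d\<in>PS N. f d) / real (card (PS N :: (nat \<Rightarrow> 'n) set))"
    using integral_pmf_of_set[of "PS N :: (nat \<Rightarrow> 'n) set" f] PS_fin PS_ne by blast
  also have "real (card (PS N :: (nat \<Rightarrow> 'n) set)) = real CARD('n) ^ N"
    by (simp add: PS_card)
  finally show ?thesis unfolding dir_pmf_eq .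
qed

lemma marg:
  fixes f :: "(nat \<Rightarrow> 'n::finite) \<Rightarrow> real"
  assumes "j \<le> N" and dep: "\<And>d d'. (\<forall>i<j. d i = d' i) \<Longrightarrow> f d = f d'"
  shows "measure_pmf.expectation (dir_pmf j) f = measure_pmf.expectation (dir_pmf N) f"
proof -
  have eq: "dir_pmf j = map_pmf (\<lambda>f x. if x \<in> {..<j} then f x else undefined) (dir_pmf N :: (nat \<Rightarrow> 'n) pmf)"
    unfolding dir_pmf_def by (rule Pi_pmf_subset) (use assms in auto)
  have "measure_pmf.expectation (dir_pmf j) f
     = measure_pmf.expectation (dir_pmf N) (\<lambda>d. f (\<lambda>x. if x \<in> {..<j} then d x else undefined))"
    unfolding eq by (rule integral_map_pmf)
  also have "\<dots> = measure_pmf.expectation (dir_pmf N) f"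
    by (rule arg_cong[where f="measure_pmf.expectation _"], rule ext, rule dep) auto
  finally show ?thesis .
qed

lemma resample:
  fixes G :: "(nat \<Rightarrow> 'n::finite) \<Rightarrow> real"
  assumes "l < N"
  shows "(\<Sum>d\<in>PS N. G d) = (\<Sum>d\<in>PS N. (\<Sum>i\<in>UNIV. G (d(l:=i))) / real CARD('n))"
proof -
  have "(\<Sum>d\<in>PS N. \<Sum>i\<in>UNIV. G (d(l:=i))) = (\<Sum>(d,i)\<in>PS N \<times> UNIV. G (d(l:= i)))"
    by (simp add: sum.cartesian_product)
  also have "\<dots> = (\<Sum>(d,i)\<in>PS N \<times> (UNIV::'n set). G d)"
    apply (rule sum.reindex_bij_witness[where i="\<lambda>(d,j). (d(l:=j), d l)" and j="\<lambda>(d,j). (d(l:=j), d l)"])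
    subgoal by clarsimp
    subgoal using assms by (clarsimp simp: PS_def PiE_dflt_def)
    subgoal by clarsimp
    subgoal using assms by (clarsimp simp: PS_def PiE_dflt_def)
    subgoal by clarsimp
    done
  also have "\<dots> = real CARD('n) * (\<Sum>d\<in>PS N. G d)"
    by (simp add: sum.cartesian_product[symmetric] sum_distrib_left)
  finally show ?thesis by (simp add: sum_divide_distrib[symmetric])
qed

lemma hist_stable: "i \<le> j \<Longrightarrow> cr_hist A b x0 \<beta> k d j i = cr_hist A b x0 \<beta> k d i i"
proof (induction j)
  case 0 then show ?case by simp
next
  case (Suc j)
  show ?case
  proof (cases "i = Suc j")
    case True then show ?thesis by simp
  next
    case False
    then have "i \<le> j" using Suc.prems by simp
    then show ?thesis using Suc.IH False by (simp add: Let_def)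
  qed
qed

lemma hist_dep: "(\<forall>i<j. d i = d' i) \<Longrightarrow> cr_hist A b x0 \<beta> k d j = cr_hist A b x0 \<beta> k d' j"
  by (induction j) (auto simp: Let_def)

lemma iter_dep: "(\<forall>i<j. d i = d' i) \<Longrightarrow> cr_iter A b x0 \<beta> k d j = cr_iter A b x0 \<beta> k d' j"
  unfolding cr_iter_def using hist_dep by metis

lemma iter_Suc:
  assumes "k j \<le> j"
  shows "cr_iter A b x0 \<beta> k d (Suc j) = cr_iter A b x0 \<beta> k d j +
     (\<beta> * A_inner A (matrix_inv A *v b - cr_iter A b x0 \<beta> k d (k j)) (axis (d j) 1)) *\<^sub>R axis (d j) 1"
  unfolding cr_iter_def using hist_stable[OF assms, of A b x0 \<beta> k d] by (simp add: Let_def)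

lemma abs2_le: "\<bar>2 * a * c\<bar> \<le> a\<^sup>2 + (c::real)\<^sup>2"
proof -
  have "0 \<le> (\<bar>a\<bar> - \<bar>c\<bar>)\<^sup>2" by simp
  then show ?thesis by (simp add: abs_mult power2_eq_square algebra_simps abs_mult_self_eq)
qed

lemma Av_axis: "(A *v axis p (1::real)) $ i = A $ i $ p"
  by (simp add: matrix_vector_mul_component inner_axis)

lemma inner_sym:
  fixes A :: "real^'n^'n"
  assumes "transpose A = A"
  shows "v \<bullet> (A *v w) = w \<bullet> (A *v v)"
proof -
  have "v \<bullet> (A *v w) = (v v* A) \<bullet> w" by (simp add: dot_lmul_matrix)
  also have "v v* A = transpose A *v v" by simp
  also have "\<dots> = A *v v" using assms by simp
  finally show ?thesis by (simp add: inner_commute)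
qed

lemma Q_step:
  fixes A :: "real^'n^'n"
  assumes sym: "transpose A = A" and diag: "A $ p $ p = 1"
  shows "(v - c *\<^sub>R axis p 1) \<bullet> (A *v (v - c *\<^sub>R axis p 1))
       = v \<bullet> (A *v v) - 2 * c * (A *v v) $ p + c\<^sup>2"
proof -
  have 1: "v \<bullet> (A *v axis p 1) = (A *v v) $ p"
    using inner_sym[OF sym, of v "axis p 1"] by (simp add: inner_axis')
  have 2: "axis p 1 \<bullet> (A *v v) = (A *v v) $ p" by (simp add: inner_axis')
  have 3: "axis p 1 \<bullet> (A *v axis p 1) = 1" using diag by (simp add: inner_axis' Av_axis)
  show ?thesis
    by (simp add: matrix_vector_mult_diff_distrib matrix_vector_mult_scaleR inner_diff_left
        inner_diff_right 1 2 3 power2_eq_square algebra_simps)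
qed


locale crs =
  fixes A :: "real^'n^'n" and b x0 :: "real^'n" and k :: "nat \<Rightarrow> nat" and \<tau> :: nat
  assumes sym: "transpose A = A" and diag: "\<forall>i. A $ i $ i = 1"
    and delay: "\<forall>j. j - \<tau> \<le> k j \<and> k j \<le> j"
begin

definition e :: "(nat \<Rightarrow> 'n) \<Rightarrow> nat \<Rightarrow> real^'n" where
  "e d j = cr_iter A b x0 1 k d j - matrix_inv A *v b"

definition g :: "(nat \<Rightarrow> 'n) \<Rightarrow> nat \<Rightarrow> real" where
  "g d j = (A *v e d (k j)) $ (d j)"

definition Q :: "real^'n \<Rightarrow> real" where
  "Q v = v \<bullet> (A *v v)"

lemma kle: "k j \<le> j" using delay by auto
lemma kge: "j \<le> k j + \<tau>" using delay by (metis add.commute le_diff_conv)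

lemma e_Suc: "e d (Suc j) = e d j - g d j *\<^sub>R axis (d j) 1"
proof -
  have "A_inner A (matrix_inv A *v b - cr_iter A b x0 1 k d (k j)) (axis (d j) 1) = - g d j"
    unfolding A_inner_def g_def e_def
    by (simp add: inner_axis' matrix_vector_mult_diff_distrib)
  then show ?thesis unfolding e_def using iter_Suc[of k j A b x0 1 d, OF kle] by (simp add: algebra_simps)
qed

lemma e_dep: "(\<forall>i<j. d i = d' i) \<Longrightarrow> e d j = e d' j"
  unfolding e_def using iter_dep by metis

lemma g_dep: "(\<forall>i<k j. d i = d' i) \<Longrightarrow> d j = d' j \<Longrightarrow> g d j = g d' j"
  unfolding g_def using e_dep by metis

lemma Q_Suc: "Q (e d (Suc j)) = Q (e d j) - 2 * g d j * (A *v e d j) $ (d j) + (g d j)\<^sup>2"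
  unfolding Q_def e_Suc using Q_step[OF sym, of "d j"] diag by simp

lemma Ae_comp: "k0 \<le> j \<Longrightarrow> (A *v e d j) $ i = (A *v e d k0) $ i - (\<Sum>l\<in>{k0..<j}. g d l * A $ i $ (d l))"
proof (induction j)
  case 0 then show ?case by simp
next
  case (Suc j)
  show ?case
  proof (cases "k0 = Suc j")
    case True then show ?thesis by simp
  next
    case False
    then have "k0 \<le> j" using Suc.prems by simp
    then show ?thesis using Suc.IH
      by (simp add: e_Suc matrix_vector_mult_diff_distrib matrix_vector_mult_scaleR Av_axis)
  qed
qed

lemma Q_upper: "Q (e d (Suc j)) \<le> Q (e d j) - (g d j)\<^sup>2
   + (\<Sum>l\<in>{k j..<j}. \<bar>A $ (d j) $ (d l)\<bar> * ((g d j)\<^sup>2 + (g d l)\<^sup>2))"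
proof -
  have a: "(A *v e d j) $ (d j) = g d j - (\<Sum>l\<in>{k j..<j}. g d l * A $ (d j) $ (d l))"
    using Ae_comp[OF kle, of d j "d j"] unfolding g_def by simp
  have eq: "Q (e d (Suc j)) = Q (e d j) - (g d j)\<^sup>2 + (\<Sum>l\<in>{k j..<j}. 2 * g d j * g d l * A $ (d j) $ (d l))"
    unfolding Q_Suc a by (simp add: sum_distrib_left algebra_simps power2_eq_square)
  have "2 * g d j * g d l * A $ (d j) $ (d l) \<le> \<bar>A $ (d j) $ (d l)\<bar> * ((g d j)\<^sup>2 + (g d l)\<^sup>2)" for l
  proof -
    have "\<bar>2 * g d j * g d l\<bar> \<le> (g d j)\<^sup>2 + (g d l)\<^sup>2"
      by (rule abs2_le)
    then have "\<bar>2 * g d j * g d l * A $ (d j) $ (d l)\<bar> \<le> ((g d j)\<^sup>2 + (g d l)\<^sup>2) * \<bar>A $ (d j) $ (d l)\<bar>"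
      by (simp add: abs_mult mult_right_mono)
    then show ?thesis by (simp add: mult.commute)
  qed
  then have "(\<Sum>l\<in>{k j..<j}. 2 * g d j * g d l * A $ (d j) $ (d l))
     \<le> (\<Sum>l\<in>{k j..<j}. \<bar>A $ (d j) $ (d l)\<bar> * ((g d j)\<^sup>2 + (g d l)\<^sup>2))"
    by (rule sum_mono)
  then show ?thesis unfolding eq by simp
qed

lemma Q_lower: "Q (e d (Suc j)) \<ge> Q (e d j) - ((A *v e d j) $ (d j))\<^sup>2"
proof -
  have "0 \<le> (g d j - (A *v e d j) $ (d j))\<^sup>2" by simp
  then show ?thesis unfolding Q_Suc by (simp add: power2_eq_square algebra_simps)
qed


lemma rowsum_le: "(\<Sum>i\<in>UNIV. \<bar>A $ r $ i\<bar>) \<le> inf_norm A"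
  unfolding inf_norm_def by (rule Max_ge) auto

lemma A_sym: "A $ i $ j = A $ j $ i"
proof -
  have "transpose A $ j $ i = A $ j $ i" using sym by simp
  then show ?thesis by (simp add: transpose_def)
qed

lemma colsum_le: "(\<Sum>i\<in>UNIV. \<bar>A $ i $ r\<bar>) \<le> inf_norm A"
  using rowsum_le[of r] by (simp add: A_sym)

lemma S1:
  assumes "k j \<le> l" "l < j" "j < N"
  shows "(\<Sum>d\<in>PS N. \<bar>A $ (d j) $ (d l)\<bar> * (g d j)\<^sup>2) \<le> (inf_norm A / real CARD('n)) * (\<Sum>d\<in>PS N. (g d j)\<^sup>2)"
proof -
  have gd: "g (d(l:=i)) j = g d j" for d i
    by (rule g_dep) (use assms in auto)
  have "(\<Sum>d\<in>PS N. \<bar>A $ (d j) $ (d l)\<bar> * (g d j)\<^sup>2)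
     = (\<Sum>d\<in>PS N. (\<Sum>i\<in>UNIV. \<bar>A $ ((d(l:=i)) j) $ ((d(l:=i)) l)\<bar> * (g (d(l:=i)) j)\<^sup>2) / real CARD('n))"
    by (rule resample) (use assms in auto)
  also have "\<dots> = (\<Sum>d\<in>PS N. (g d j)\<^sup>2 * ((\<Sum>i\<in>UNIV. \<bar>A $ (d j) $ i\<bar>) / real CARD('n)))"
    using assms by (simp add: gd sum_distrib_left sum_distrib_right mult.commute)
  also have "\<dots> \<le> (\<Sum>d\<in>PS N. (g d j)\<^sup>2 * (inf_norm A / real CARD('n)))"
    by (intro sum_mono mult_left_mono divide_right_mono rowsum_le) auto
  finally show ?thesis by (simp add: sum_distrib_left sum_distrib_right mult.commute)
qed

lemma S2:
  assumes "l < j" "j < N"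
  shows "(\<Sum>d\<in>PS N. \<bar>A $ (d j) $ (d l)\<bar> * (g d l)\<^sup>2) \<le> (inf_norm A / real CARD('n)) * (\<Sum>d\<in>PS N. (g d l)\<^sup>2)"
proof -
  have gd: "g (d(j:=i)) l = g d l" for d i
    by (rule g_dep) (use assms kle[of l] in auto)
  have "(\<Sum>d\<in>PS N. \<bar>A $ (d j) $ (d l)\<bar> * (g d l)\<^sup>2)
     = (\<Sum>d\<in>PS N. (\<Sum>i\<in>UNIV. \<bar>A $ ((d(j:=i)) j) $ ((d(j:=i)) l)\<bar> * (g (d(j:=i)) l)\<^sup>2) / real CARD('n))"
    by (rule resample) (use assms in auto)
  also have "\<dots> = (\<Sum>d\<in>PS N. (g d l)\<^sup>2 * ((\<Sum>i\<in>UNIV. \<bar>A $ i $ (d l)\<bar>) / real CARD('n)))"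
    using assms by (simp add: gd sum_distrib_left sum_distrib_right mult.commute)
  also have "\<dots> \<le> (\<Sum>d\<in>PS N. (g d l)\<^sup>2 * (inf_norm A / real CARD('n)))"
    by (intro sum_mono mult_left_mono divide_right_mono colsum_le) auto
  finally show ?thesis by (simp add: sum_distrib_left sum_distrib_right mult.commute)
qed

lemma sumsq_norm: "(\<Sum>i\<in>UNIV. (w $ i)\<^sup>2) = (norm (w::real^'n))\<^sup>2"
  unfolding power2_norm_eq_inner inner_vec_def by (simp add: power2_eq_square)

lemma S3:
  assumes "j < N"
  shows "(\<Sum>d\<in>PS N. (g d j)\<^sup>2) = (\<Sum>d\<in>PS N. (norm (A *v e d (k j)))\<^sup>2 / real CARD('n))"
proof -
  have ed: "e (d(j:=i)) (k j) = e d (k j)" for d i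
    by (rule e_dep) (use kle[of j] in auto)
  have "(\<Sum>d\<in>PS N. (g d j)\<^sup>2) = (\<Sum>d\<in>PS N. (\<Sum>i\<in>UNIV. (g (d(j:=i)) j)\<^sup>2) / real CARD('n))"
    by (rule resample) (use assms in auto)
  also have "\<dots> = (\<Sum>d\<in>PS N. (norm (A *v e d (k j)))\<^sup>2 / real CARD('n))"
    by (simp add: g_def ed sumsq_norm)
  finally show ?thesis .
qed

lemma S4:
  assumes "j < N"
  shows "(\<Sum>d\<in>PS N. ((A *v e d j) $ (d j))\<^sup>2) = (\<Sum>d\<in>PS N. (norm (A *v e d j))\<^sup>2 / real CARD('n))"
proof -
  have ed: "e (d(j:=i)) j = e d j" for d i
    by (rule e_dep) auto
  have "(\<Sum>d\<in>PS N. ((A *v e d j) $ (d j))\<^sup>2) = (\<Sum>d\<in>PS N. (\<Sum>i\<in>UNIV. ((A *v e (d(j:=i)) j) $ ((d(j:=i)) j))\<^sup>2) / real CARD('n))"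
    by (rule resample) (use assms in auto)
  also have "\<dots> = (\<Sum>d\<in>PS N. (norm (A *v e d j))\<^sup>2 / real CARD('n))"
    by (simp add: ed sumsq_norm)
  finally show ?thesis .
qed

definition SE :: "nat \<Rightarrow> nat \<Rightarrow> real" where "SE N j = (\<Sum>d\<in>PS N. Q (e d j))"
definition SG :: "nat \<Rightarrow> nat \<Rightarrow> real" where "SG N j = (\<Sum>d\<in>PS N. (g d j)\<^sup>2)"

lemma R1:
  assumes "j < N"
  shows "SE N (Suc j) \<le> SE N j - SG N j
     + (\<Sum>l\<in>{k j..<j}. (inf_norm A / real CARD('n)) * (SG N j + SG N l))"
proof -
  let ?r = "inf_norm A / real CARD('n)"
  have "SE N (Suc j) \<le> (\<Sum>d\<in>PS N. Q (e d j) - (g d j)\<^sup>2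
      + (\<Sum>l\<in>{k j..<j}. \<bar>A $ (d j) $ (d l)\<bar> * ((g d j)\<^sup>2 + (g d l)\<^sup>2)))"
    unfolding SE_def by (rule sum_mono) (rule Q_upper)
  also have "\<dots> = SE N j - SG N j + (\<Sum>l\<in>{k j..<j}.
      (\<Sum>d\<in>PS N. \<bar>A $ (d j) $ (d l)\<bar> * (g d j)\<^sup>2) + (\<Sum>d\<in>PS N. \<bar>A $ (d j) $ (d l)\<bar> * (g d l)\<^sup>2))"
    unfolding SE_def SG_def
    by (simp add: sum.distrib sum_subtractf distrib_left sum.swap[of _ "PS N"])
  also have "\<dots> \<le> SE N j - SG N j + (\<Sum>l\<in>{k j..<j}. ?r * (SG N j + SG N l))"
  proof -
    have "(\<Sum>d\<in>PS N. \<bar>A $ (d j) $ (d l)\<bar> * (g d j)\<^sup>2) + (\<Sum>d\<in>PS N. \<bar>A $ (d j) $ (d l)\<bar> * (g d l)\<^sup>2)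
       \<le> ?r * (SG N j + SG N l)" if "l \<in> {k j..<j}" for l
      using S1[of j l N] S2[of l j N] that assms unfolding SG_def by (simp add: distrib_left)
    then show ?thesis by (intro add_left_mono sum_mono) auto
  qed
  finally show ?thesis .
qed

lemma R4:
  assumes "j < N"
  shows "SE N (Suc j) \<ge> SE N j - (\<Sum>d\<in>PS N. (norm (A *v e d j))\<^sup>2 / real CARD('n))"
proof -
  have "SE N j - (\<Sum>d\<in>PS N. ((A *v e d j) $ (d j))\<^sup>2) \<le> SE N (Suc j)"
    unfolding SE_def sum_subtractf[symmetric] by (rule sum_mono) (rule Q_lower)
  then show ?thesis using S4[OF assms] by simp
qed

end

lemma quad_zero:
  fixes a c :: real
  assumes "\<And>t. a * t + c * t\<^sup>2 \<le> 0"
  shows "a = 0"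
proof -
  define s where "s = 1 / (2 * (\<bar>c\<bar> + 1))"
  have spos: "s > 0" unfolding s_def by (simp add: add_pos_nonneg)
  have cs: "\<bar>c\<bar> * s < 1" unfolding s_def by (simp add: field_simps)
  have cs2: "1 + c * s > 0"
  proof -
    have "- (\<bar>c\<bar> * s) \<le> c * s" using mult_right_mono[of "- \<bar>c\<bar>" c s] spos by simp
    then show ?thesis using cs by linarith
  qed
  have "a * (a * s) + c * (a * s)\<^sup>2 \<le> 0" by (rule assms)
  also have "a * (a * s) + c * (a * s)\<^sup>2 = a\<^sup>2 * (s * (1 + c * s))"
    by (simp add: power2_eq_square algebra_simps)
  finally have "a\<^sup>2 * (s * (1 + c * s)) \<le> 0" .
  have "s * (1 + c * s) > 0" using spos cs2 by simp
  show ?thesis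
  proof (rule ccontr)
    assume "a \<noteq> 0"
    then have "a\<^sup>2 > 0" by simp
    have "a\<^sup>2 * (s * (1 + c * s)) > 0" using \<open>a\<^sup>2 > 0\<close> \<open>s * (1 + c * s) > 0\<close> by (rule mult_pos_pos)
    then show False using \<open>a\<^sup>2 * (s * (1 + c * s)) \<le> 0\<close> by linarith
  qed
qed

lemma inner_sym':
  fixes M :: "real^'n^'n"
  assumes "transpose M = M"
  shows "v \<bullet> (M *v w) = w \<bullet> (M *v v)"
proof -
  have "v \<bullet> (M *v w) = (v v* M) \<bullet> w" by (simp add: dot_lmul_matrix)
  also have "v v* M = transpose M *v v" by simp
  also have "\<dots> = M *v v" using assms by simp
  finally show ?thesis by (simp add: inner_commute)
qed

lemma quad_expand:
  fixes M :: "real^'n^'n"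
  assumes "transpose M = M"
  shows "(u + t *\<^sub>R w) \<bullet> (M *v (u + t *\<^sub>R w)) = u \<bullet> (M *v u) + 2 * t * (w \<bullet> (M *v u)) + t\<^sup>2 * (w \<bullet> (M *v w))"
  using inner_sym'[OF assms, of u w]
  by (simp add: matrix_vector_right_distrib matrix_vector_mult_scaleR inner_add_left inner_add_right
      power2_eq_square algebra_simps)

lemma ray_max:
  fixes M :: "real^'n^'n"
  assumes sym: "transpose M = M"
  shows "\<exists>\<mu> u. u \<noteq> 0 \<and> M *v u = \<mu> *\<^sub>R u \<and> (\<forall>v. v \<bullet> (M *v v) \<le> \<mu> * (norm v)\<^sup>2)"
proof -
  define f where "f = (\<lambda>v::real^'n. v \<bullet> (M *v v))"
  have cont: "continuous_on (sphere 0 1) f"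
    unfolding f_def by (intro continuous_on_inner continuous_on_id matrix_vector_mult_linear_continuous_on)
  have ne: "sphere (0::real^'n) 1 \<noteq> {}"
  proof -
    have "axis undefined (1::real) \<in> sphere (0::real^'n) 1" by simp
    then show ?thesis by blast
  qed
  obtain u where u: "u \<in> sphere 0 1" and umax: "\<And>y. y \<in> sphere 0 1 \<Longrightarrow> f y \<le> f u"
    using continuous_attains_sup[OF compact_sphere ne cont] by blast
  have nu: "norm u = 1" using u by simp
  have uu: "u \<bullet> u = 1" using nu by (metis power2_norm_eq_inner one_power2)
  define \<mu> where "\<mu> = f u"
  have fscale: "f (c *\<^sub>R v) = c\<^sup>2 * f v" for c v
    unfolding f_def by (simp add: matrix_vector_mult_scaleR power2_eq_square)
  have bound: "f v \<le> \<mu> * (norm v)\<^sup>2" for v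
  proof (cases "v = 0")
    case True then show ?thesis by (simp add: f_def)
  next
    case False
    then have nv: "norm v > 0" by simp
    have "f ((1 / norm v) *\<^sub>R v) \<le> \<mu>" unfolding \<mu>_def by (rule umax) (use nv in simp)
    then have "f v / (norm v)\<^sup>2 \<le> \<mu>" by (simp add: fscale power_divide)
    then show ?thesis using nv by (simp add: divide_le_eq mult.commute)
  qed
  define w where "w = M *v u - \<mu> *\<^sub>R u"
  have "\<And>t. (2 * (w \<bullet> w)) * t + (f w - \<mu> * (norm w)\<^sup>2) * t\<^sup>2 \<le> 0"
  proof -
    fix t :: real
    have "f (u + t *\<^sub>R w) \<le> \<mu> * (norm (u + t *\<^sub>R w))\<^sup>2" by (rule bound)
    moreover have "f (u + t *\<^sub>R w) = \<mu> + 2 * t * (w \<bullet> (M *v u)) + t\<^sup>2 * f w"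
      unfolding f_def quad_expand[OF sym] using \<mu>_def f_def by simp
    moreover have "(norm (u + t *\<^sub>R w))\<^sup>2 = 1 + 2 * t * (u \<bullet> w) + t\<^sup>2 * (norm w)\<^sup>2"
      unfolding power2_norm_eq_inner using uu by (simp add: inner_add_left inner_add_right power2_eq_square
          algebra_simps inner_commute)
    moreover have "w \<bullet> (M *v u) - \<mu> * (u \<bullet> w) = w \<bullet> w"
      unfolding w_def by (simp add: inner_diff_left inner_diff_right algebra_simps inner_commute)
    ultimately show "(2 * (w \<bullet> w)) * t + (f w - \<mu> * (norm w)\<^sup>2) * t\<^sup>2 \<le> 0"
      by (simp add: algebra_simps)
  qed
  then have "2 * (w \<bullet> w) = 0" by (rule quad_zero)
  then have "w = 0" by simp
  then have "M *v u = \<mu> *\<^sub>R u" unfolding w_def by simp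
  moreover have "u \<noteq> 0" using nu by auto
  ultimately show ?thesis using bound unfolding f_def by blast
qed


lemma neg_mv: "(- M) *v v = - (M *v (v::real^'n))"
  by (simp add: matrix_vector_mult_def vec_eq_iff sum_negf)

lemma transpose_neg': "transpose (- M) = - transpose (M::real^'n^'n)"
  by (simp add: transpose_def vec_eq_iff)

lemma ray_min:
  fixes M :: "real^'n^'n"
  assumes sym: "transpose M = M"
  shows "\<exists>\<mu> u. u \<noteq> 0 \<and> M *v u = \<mu> *\<^sub>R u \<and> (\<forall>v. v \<bullet> (M *v v) \<ge> \<mu> * (norm v)\<^sup>2)"
proof -
  have "transpose (- M) = - M" using sym by (simp add: transpose_neg')
  from ray_max[OF this] obtain \<mu> u where "u \<noteq> 0" "(- M) *v u = \<mu> *\<^sub>R u"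
    "\<forall>v. v \<bullet> ((- M) *v v) \<le> \<mu> * (norm v)\<^sup>2" by blast
  note h = this
  have "M *v u = (- \<mu>) *\<^sub>R u" using h(2) by (simp add: neg_mv) (metis minus_equation_iff scaleR_minus_left)
  moreover have "\<forall>v. v \<bullet> (M *v v) \<ge> (- \<mu>) * (norm v)\<^sup>2"
  proof
    fix v
    have "- (v \<bullet> (M *v v)) \<le> \<mu> * (norm v)\<^sup>2" using h(3) by (simp add: neg_mv)
    then show "v \<bullet> (M *v v) \<ge> (- \<mu>) * (norm v)\<^sup>2" by simp
  qed
  ultimately show ?thesis using h(1) by blast
qed

lemma eig_finite:
  fixes M :: "real^'n^'n"
  assumes sym: "transpose M = M"
  shows "finite (mat_eigenvalues M)"
proof -
  let ?S = "mat_eigenvalues M"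
  define c where "c l = (SOME v. v \<noteq> 0 \<and> M *v v = l *s v)" for l
  have cP: "c l \<noteq> 0 \<and> M *v c l = l *\<^sub>R c l" if "l \<in> ?S" for l
  proof -
    have "\<exists>v. v \<noteq> 0 \<and> M *v v = l *s v" using that by (simp add: mat_eigenvalues_def)
    then have "c l \<noteq> 0 \<and> M *v c l = l *s c l" unfolding c_def by (rule someI_ex)
    then show ?thesis by (simp add: scalar_mult_eq_scaleR)
  qed
  have orth: "c l \<bullet> c l' = 0" if "l \<in> ?S" "l' \<in> ?S" "l \<noteq> l'" for l l'
  proof -
    have "l * (c l \<bullet> c l') = c l' \<bullet> (M *v c l)" using cP[OF that(1)] by (simp add: inner_commute)
    also have "\<dots> = c l \<bullet> (M *v c l')" by (rule inner_sym'[OF sym, symmetric])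
    also have "\<dots> = l' * (c l \<bullet> c l')" using cP[OF that(2)] by simp
    finally show ?thesis using that(3) by simp
  qed
  have inj: "inj_on c ?S"
  proof (rule inj_onI)
    fix l l' assume "l \<in> ?S" "l' \<in> ?S" "c l = c l'"
    then show "l = l'" using orth[of l l'] cP[of l] by auto
  qed
  have "pairwise orthogonal (c ` ?S)"
    unfolding pairwise_def orthogonal_def using orth by auto
  moreover have "0 \<notin> c ` ?S" using cP by auto
  ultimately have "independent (c ` ?S)" by (rule pairwise_orthogonal_independent)
  then have "finite (c ` ?S)" using independent_bound by blast
  then show ?thesis using inj by (rule finite_imageD)
qed

lemma eig_le:
  fixes M :: "real^'n^'n"
  assumes "l \<in> mat_eigenvalues M" "\<forall>v. v \<bullet> (M *v v) \<le> \<mu> * (norm v)\<^sup>2"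
  shows "l \<le> \<mu>"
proof -
  obtain v where v: "v \<noteq> 0" "M *v v = l *\<^sub>R v"
    using assms(1) by (auto simp: mat_eigenvalues_def scalar_mult_eq_scaleR)
  have "l * (norm v)\<^sup>2 = v \<bullet> (M *v v)" using v by (simp add: power2_norm_eq_inner)
  also have "\<dots> \<le> \<mu> * (norm v)\<^sup>2" using assms(2) by blast
  finally show ?thesis using v by simp
qed

lemma eig_ge:
  fixes M :: "real^'n^'n"
  assumes "l \<in> mat_eigenvalues M" "\<forall>v. v \<bullet> (M *v v) \<ge> \<mu> * (norm v)\<^sup>2"
  shows "\<mu> \<le> l"
proof -
  obtain v where v: "v \<noteq> 0" "M *v v = l *\<^sub>R v"
    using assms(1) by (auto simp: mat_eigenvalues_def scalar_mult_eq_scaleR)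
  have "\<mu> * (norm v)\<^sup>2 \<le> v \<bullet> (M *v v)" using assms(2) by blast
  also have "\<dots> = l * (norm v)\<^sup>2" using v by (simp add: power2_norm_eq_inner)
  finally show ?thesis using v by simp
qed

lemma lam_max_bound:
  fixes M :: "real^'n^'n"
  assumes sym: "transpose M = M"
  shows "\<forall>v. v \<bullet> (M *v v) \<le> lam_max M * (norm v)\<^sup>2"
proof -
  obtain \<mu> u where u: "u \<noteq> 0" "M *v u = \<mu> *\<^sub>R u" and b: "\<forall>v. v \<bullet> (M *v v) \<le> \<mu> * (norm v)\<^sup>2"
    using ray_max[OF sym] by blast
  have "\<mu> \<in> mat_eigenvalues M" using u by (auto simp: mat_eigenvalues_def scalar_mult_eq_scaleR)
  then have "lam_max M = \<mu>" unfolding lam_max_def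
    by (intro Max_eqI eig_finite[OF sym]) (use eig_le b in auto)
  then show ?thesis using b by simp
qed

lemma lam_min_bound:
  fixes M :: "real^'n^'n"
  assumes sym: "transpose M = M"
  shows "\<forall>v. v \<bullet> (M *v v) \<ge> lam_min M * (norm v)\<^sup>2" and "lam_min M \<in> mat_eigenvalues M"
proof -
  obtain \<mu> u where u: "u \<noteq> 0" "M *v u = \<mu> *\<^sub>R u" and b: "\<forall>v. v \<bullet> (M *v v) \<ge> \<mu> * (norm v)\<^sup>2"
    using ray_min[OF sym] by blast
  have m: "\<mu> \<in> mat_eigenvalues M" using u by (auto simp: mat_eigenvalues_def scalar_mult_eq_scaleR)
  then have "lam_min M = \<mu>" unfolding lam_min_def
    by (intro Min_eqI eig_finite[OF sym]) (use eig_ge b in auto)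
  then show "\<forall>v. v \<bullet> (M *v v) \<ge> lam_min M * (norm v)\<^sup>2" "lam_min M \<in> mat_eigenvalues M" using b m by simp_all
qed


lemma lam_max_eig:
  fixes M :: "real^'n^'n"
  assumes sym: "transpose M = M"
  shows "lam_max M \<in> mat_eigenvalues M"
proof -
  obtain \<mu> u where u: "u \<noteq> 0" "M *v u = \<mu> *\<^sub>R u" and b: "\<forall>v. v \<bullet> (M *v v) \<le> \<mu> * (norm v)\<^sup>2"
    using ray_max[OF sym] by blast
  have m: "\<mu> \<in> mat_eigenvalues M" using u by (auto simp: mat_eigenvalues_def scalar_mult_eq_scaleR)
  then have "lam_max M = \<mu>" unfolding lam_max_def
    by (intro Max_eqI eig_finite[OF sym]) (use eig_le b in auto)
  then show ?thesis using m by simp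
qed

lemma gersh:
  fixes M :: "real^'n^'n"
  assumes "l \<in> mat_eigenvalues M"
  shows "\<bar>l\<bar> \<le> inf_norm M"
proof -
  obtain v where v: "v \<noteq> 0" "M *v v = l *\<^sub>R v"
    using assms(1) by (auto simp: mat_eigenvalues_def scalar_mult_eq_scaleR)
  define m where "m = Max (range (\<lambda>c. \<bar>v $ c\<bar>))"
  have "m \<in> range (\<lambda>c. \<bar>v $ c\<bar>)" unfolding m_def by (rule Max_in) auto
  then obtain p where p: "m = \<bar>v $ p\<bar>" by auto
  have mge: "\<bar>v $ c\<bar> \<le> m" for c unfolding m_def by (rule Max_ge) auto
  obtain c0 where "v $ c0 \<noteq> 0" using v(1) by (metis vec_eq_iff zero_index)
  then have mpos: "m > 0" using mge[of c0] by linarith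
  have "l * v $ p = (M *v v) $ p" using v(2) by simp
  also have "\<dots> = (\<Sum>c\<in>UNIV. M $ p $ c * v $ c)" by (simp add: matrix_vector_mult_def)
  finally have "\<bar>l * v $ p\<bar> = \<bar>\<Sum>c\<in>UNIV. M $ p $ c * v $ c\<bar>" by simp
  then have "\<bar>l\<bar> * m = \<bar>\<Sum>c\<in>UNIV. M $ p $ c * v $ c\<bar>" by (simp add: p abs_mult)
  also have "\<dots> \<le> (\<Sum>c\<in>UNIV. \<bar>M $ p $ c\<bar> * \<bar>v $ c\<bar>)" by (rule order_trans[OF sum_abs]) (simp add: abs_mult)
  also have "\<dots> \<le> (\<Sum>c\<in>UNIV. \<bar>M $ p $ c\<bar> * m)" by (intro sum_mono mult_left_mono mge) auto
  also have "\<dots> = (\<Sum>c\<in>UNIV. \<bar>M $ p $ c\<bar>) * m" by (simp add: sum_distrib_right)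
  also have "\<dots> \<le> inf_norm M * m" unfolding inf_norm_def
    by (intro mult_right_mono Max_ge) (use mpos in auto)
  finally show ?thesis using mpos by simp
qed

locale spdA =
  fixes A :: "real^'n^'n"
  assumes spd: "spd A" and diagA: "\<forall>i. A $ i $ i = 1" and n2: "CARD('n) \<ge> 2"
begin

lemma symA: "transpose A = A" using spd by (simp add: spd_def)

lemma posA: "x \<noteq> 0 \<Longrightarrow> x \<bullet> (A *v x) > 0" using spd by (simp add: spd_def)

lemma psdA: "x \<bullet> (A *v x) \<ge> 0"
  by (cases "x = 0") (auto dest: posA intro: less_imp_le)

lemma CS_A: "(x \<bullet> (A *v y))\<^sup>2 \<le> (x \<bullet> (A *v x)) * (y \<bullet> (A *v y))"
proof (cases "y = 0")
  case True then show ?thesis by simp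
next
  case False
  then have qy: "y \<bullet> (A *v y) > 0" by (rule posA)
  define B where "B = x \<bullet> (A *v y)"
  define t where "t = B / (y \<bullet> (A *v y))"
  have "0 \<le> (x + (- t) *\<^sub>R y) \<bullet> (A *v (x + (- t) *\<^sub>R y))" by (rule psdA)
  also have "\<dots> = x \<bullet> (A *v x) - 2 * t * B + t\<^sup>2 * (y \<bullet> (A *v y))"
    unfolding quad_expand[OF symA] B_def using inner_sym'[OF symA, of x y] by simp
  also have "\<dots> = x \<bullet> (A *v x) - B\<^sup>2 / (y \<bullet> (A *v y))"
    unfolding t_def using qy by (simp add: field_simps power2_eq_square)
  finally have "B\<^sup>2 / (y \<bullet> (A *v y)) \<le> x \<bullet> (A *v x)" by simp
  then show ?thesis unfolding B_def using qy by (simp add: divide_le_eq)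
qed

lemma lmin_bound: "\<forall>v. v \<bullet> (A *v v) \<ge> lam_min A * (norm v)\<^sup>2"
  using lam_min_bound[OF symA] by blast

lemma lmax_bound: "\<forall>v. v \<bullet> (A *v v) \<le> lam_max A * (norm v)\<^sup>2"
  using lam_max_bound[OF symA] by blast

lemma lmin_pos: "lam_min A > 0"
proof -
  obtain v where v: "v \<noteq> 0" "A *v v = lam_min A *\<^sub>R v"
    using lam_min_bound(2)[OF symA] by (auto simp: mat_eigenvalues_def scalar_mult_eq_scaleR)
  have "0 < v \<bullet> (A *v v)" using v(1) by (rule posA)
  also have "\<dots> = lam_min A * (norm v)\<^sup>2" using v by (simp add: power2_norm_eq_inner)
  finally show ?thesis using v(1) by (simp add: zero_less_mult_iff)
qed

lemma lmax_ge1: "lam_max A \<ge> 1"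
proof -
  have "axis undefined 1 \<bullet> (A *v axis undefined 1) = 1"
    using diagA by (simp add: inner_axis' Av_axis)
  then show ?thesis using lmax_bound[rule_format, of "axis undefined 1"] by simp
qed

lemma Anorm_upper: "(norm (A *v x))\<^sup>2 \<le> lam_max A * (x \<bullet> (A *v x))"
proof (cases "A *v x = 0")
  case True then show ?thesis using lmax_ge1 psdA[of x] by simp
next
  case False
  define y where "y = A *v x"
  have ny: "(norm y)\<^sup>2 > 0" using False unfolding y_def by simp
  have "(norm y)\<^sup>2 = x \<bullet> (A *v y)"
    unfolding y_def power2_norm_eq_inner using inner_sym'[OF symA, of "A *v x" x] by simp
  then have "((norm y)\<^sup>2)\<^sup>2 \<le> (x \<bullet> (A *v x)) * (y \<bullet> (A *v y))" using CS_A by metis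
  also have "\<dots> \<le> (x \<bullet> (A *v x)) * (lam_max A * (norm y)\<^sup>2)"
    by (intro mult_left_mono psdA) (use lmax_bound in blast)
  finally have "(norm y)\<^sup>2 * (norm y)\<^sup>2 \<le> (lam_max A * (x \<bullet> (A *v x))) * (norm y)\<^sup>2"
    by (simp add: power2_eq_square algebra_simps)
  then have "(norm y)\<^sup>2 \<le> lam_max A * (x \<bullet> (A *v x))" using ny by (rule mult_right_le_imp_le)
  then show ?thesis by (simp add: y_def)
qed

lemma Anorm_lower: "lam_min A * (x \<bullet> (A *v x)) \<le> (norm (A *v x))\<^sup>2"
proof (cases "x \<bullet> (A *v x) = 0")
  case True then show ?thesis by simp
next
  case False
  then have qx: "x \<bullet> (A *v x) > 0" using psdA[of x] by simp
  have "lam_min A * (x \<bullet> (A *v x))\<^sup>2 \<le> lam_min A * ((x \<bullet> x) * ((A *v x) \<bullet> (A *v x)))"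
    using Cauchy_Schwarz_ineq[of x "A *v x"] lmin_pos by (simp add: mult_left_mono)
  also have "\<dots> = (lam_min A * (norm x)\<^sup>2) * (norm (A *v x))\<^sup>2"
    by (simp add: power2_norm_eq_inner)
  also have "\<dots> \<le> (x \<bullet> (A *v x)) * (norm (A *v x))\<^sup>2"
    by (intro mult_right_mono) (use lmin_bound in auto)
  finally have "(lam_min A * (x \<bullet> (A *v x))) * (x \<bullet> (A *v x)) \<le> (norm (A *v x))\<^sup>2 * (x \<bullet> (A *v x))"
    by (simp add: power2_eq_square algebra_simps)
  then show ?thesis using qx by (simp add: mult_le_cancel_right)
qed

lemma offdiag: "i \<noteq> j \<Longrightarrow> \<bar>A $ i $ j\<bar> < 1"
proof -
  assume ij: "i \<noteq> j"
  define s where "s = sgn (A $ j $ i)"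
  define v where "v = axis i (1::real) - s *\<^sub>R axis j 1"
  have "v $ i = 1" using ij by (simp add: v_def axis_def)
  then have "v \<noteq> 0" by auto
  then have "0 < v \<bullet> (A *v v)" by (rule posA)
  also have "v \<bullet> (A *v v) = 1 - 2 * s * A $ j $ i + s\<^sup>2"
    unfolding v_def using Q_step[OF symA, of j "axis i 1" s] diagA by (simp add: Av_axis inner_axis')
  finally have h: "0 < 1 - 2 * s * A $ j $ i + s\<^sup>2" .
  have "\<bar>A $ j $ i\<bar> < 1"
  proof (cases "A $ j $ i = 0")
    case True then show ?thesis by simp
  next
    case False
    then have "s\<^sup>2 = 1" "s * A $ j $ i = \<bar>A $ j $ i\<bar>" unfolding s_def
      by (auto simp: sgn_if)
    then show ?thesis using h by simp
  qed
  moreover have "A $ j $ i = A $ i $ j" using symA by (metis transpose_def vec_lambda_beta)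
  ultimately show ?thesis by simp
qed

lemma absA_le1: "\<bar>A $ i $ j\<bar> \<le> 1"
  by (cases "i = j") (use diagA offdiag in \<open>auto intro: less_imp_le\<close>)

lemma inf_lt: "inf_norm A < real CARD('n)"
proof -
  have "inf_norm A \<in> range (\<lambda>l. \<Sum>r\<in>UNIV. \<bar>A $ l $ r\<bar>)" unfolding inf_norm_def by (rule Max_in) auto
  then obtain l where l: "inf_norm A = (\<Sum>r\<in>UNIV. \<bar>A $ l $ r\<bar>)" by auto
  have "\<exists>c. c \<noteq> l"
  proof (rule ccontr)
    assume "\<not> (\<exists>c. c \<noteq> l)"
    then have "(UNIV::'n set) = {l}" by auto
    then have "CARD('n) = 1" by (metis card.empty card_insert_disjoint empty_iff finite.emptyI One_nat_def)
    then show False using n2 by simp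
  qed
  then obtain c where c: "c \<noteq> l" by blast
  have "(\<Sum>r\<in>UNIV. \<bar>A $ l $ r\<bar>) < (\<Sum>r\<in>(UNIV::'n set). (1::real))"
    using sum_strict_mono_ex1[of UNIV "\<lambda>r. \<bar>A $ l $ r\<bar>" "\<lambda>r. 1"] absA_le1 offdiag[of l c] c by auto
  then show ?thesis using l by simp
qed

lemma lmax_lt: "lam_max A < real CARD('n)"
  using gersh[OF lam_max_eig[OF symA]] inf_lt by simp

lemma lmin_le_lmax: "lam_min A \<le> lam_max A"
  using eig_le[OF lam_min_bound(2)[OF symA] lmax_bound] .

end

locale seqs =
  fixes E G :: "nat \<Rightarrow> real" and k :: "nat \<Rightarrow> nat" and \<tau> N :: nat and \<rho> c C :: real
  assumes delay: "\<forall>j. j - \<tau> \<le> k j \<and> k j \<le> j"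
    and R1: "\<And>j. j < N \<Longrightarrow> E (Suc j) \<le> E j - G j + (\<Sum>l\<in>{k j..<j}. \<rho> * (G j + G l))"
    and R2: "\<And>j. j < N \<Longrightarrow> c * E (k j) \<le> G j"
    and R3: "\<And>j. j < N \<Longrightarrow> G j \<le> C * E (k j)"
    and R4: "\<And>j. j < N \<Longrightarrow> (1 - C) * E j \<le> E (Suc j)"
    and Enn: "\<And>j. E j \<ge> 0" and Gnn: "\<And>j. G j \<ge> 0"
    and rho: "\<rho> \<ge> 0" and cnn: "c \<ge> 0" and Cpos: "C > 0" and Clt: "C < 1"
begin

abbreviation "q \<equiv> 1 - C"

lemma kle: "k j \<le> j" using delay by auto
lemma kge: "j \<le> k j + \<tau>" using delay by (metis add.commute le_diff_conv)

lemma card_kj: "card {k j..<j} \<le> \<tau>"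
  using kge[of j] by simp

lemma step1: "j < N \<Longrightarrow> E (Suc j) \<le> E j - (1 - \<rho> * \<tau>) * G j + \<rho> * (\<Sum>l\<in>{k j..<j}. G l)"
proof -
  assume j: "j < N"
  have "(\<Sum>l\<in>{k j..<j}. \<rho> * (G j + G l)) = \<rho> * (real (card {k j..<j}) * G j) + \<rho> * (\<Sum>l\<in>{k j..<j}. G l)"
    by (simp add: sum.distrib sum_distrib_left distrib_left)
  also have "\<dots> \<le> \<rho> * (real \<tau> * G j) + \<rho> * (\<Sum>l\<in>{k j..<j}. G l)"
    using card_kj[of j] rho Gnn[of j] by (intro add_right_mono mult_left_mono mult_right_mono) auto
  finally show ?thesis using R1[OF j] by (simp add: algebra_simps)
qed

lemma summed:
  assumes "s \<le> m" "m \<le> N"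
  shows "E m + (1 - \<rho> * \<tau>) * (\<Sum>j\<in>{s..<m}. G j) \<le> E s + \<rho> * (\<Sum>j\<in>{s..<m}. \<Sum>l\<in>{k j..<j}. G l)"
  using assms
proof (induction m)
  case 0 then show ?case by simp
next
  case (Suc m)
  show ?case
  proof (cases "s = Suc m")
    case True then show ?thesis by simp
  next
    case False
    then have sm: "s \<le> m" "m < N" using Suc.prems by auto
    have IH: "E m + (1 - \<rho> * \<tau>) * (\<Sum>j\<in>{s..<m}. G j) \<le> E s + \<rho> * (\<Sum>j\<in>{s..<m}. \<Sum>l\<in>{k j..<j}. G l)"
      using Suc.IH sm by simp
    show ?thesis using IH step1[OF sm(2)] sm(1) by (simp add: algebra_simps)
  qed
qed

lemma count_le: "card {j\<in>{s..<m}. l \<in> {k j..<j}} \<le> \<tau>"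
proof -
  have "{j\<in>{s..<m}. l \<in> {k j..<j}} \<subseteq> {Suc l..l + \<tau>}"
    using kge by (auto simp: Suc_le_eq) (metis add_le_mono1 le_trans)
  then have "card {j\<in>{s..<m}. l \<in> {k j..<j}} \<le> card {Suc l..l + \<tau>}" by (rule card_mono[OF finite_atLeastAtMost])
  then show ?thesis by simp
qed

lemma dsum:
  assumes "s \<le> m"
  shows "(\<Sum>j\<in>{s..<m}. \<Sum>l\<in>{k j..<j}. G l) \<le> \<tau> * (\<Sum>l\<in>{s..<m}. G l) + \<tau> * (\<Sum>l\<in>{s - \<tau>..<s}. G l)"
proof -
  have sub: "{k j..<j} \<subseteq> {s - \<tau>..<m}" if "j \<in> {s..<m}" for j
    using that delay by auto (metis diff_le_mono le_trans)
  have pt: "(\<Sum>l\<in>{k j..<j}. G l) = (\<Sum>l\<in>{s - \<tau>..<m}. if l \<in> {k j..<j} then G l else 0)"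
    if j: "j \<in> {s..<m}" for j
  proof -
    have "(\<Sum>l\<in>{s - \<tau>..<m}. if l \<in> {k j..<j} then G l else 0) = sum G ({s - \<tau>..<m} \<inter> {k j..<j})"
      by (rule sum.inter_restrict[OF finite_atLeastLessThan, symmetric])
    also have "\<dots> = sum G {k j..<j}" by (simp only: Int_absorb1[OF sub[OF j]])
    finally show ?thesis by simp
  qed
  have "(\<Sum>j\<in>{s..<m}. \<Sum>l\<in>{k j..<j}. G l) = (\<Sum>j\<in>{s..<m}. \<Sum>l\<in>{s - \<tau>..<m}. if l \<in> {k j..<j} then G l else 0)"
    by (rule sum.cong[OF refl pt])
  also have "\<dots> = (\<Sum>l\<in>{s - \<tau>..<m}. \<Sum>j\<in>{s..<m}. if l \<in> {k j..<j} then G l else 0)"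
    by (rule sum.swap)
  also have "\<dots> = (\<Sum>l\<in>{s - \<tau>..<m}. real (card {j\<in>{s..<m}. l \<in> {k j..<j}}) * G l)"
    by (intro sum.cong refl) (simp add: sum.inter_filter[symmetric])
  also have "\<dots> \<le> (\<Sum>l\<in>{s - \<tau>..<m}. real \<tau> * G l)"
    using count_le Gnn by (intro sum_mono mult_right_mono) auto
  also have "\<dots> = \<tau> * (\<Sum>l\<in>{s - \<tau>..<s}. G l) + \<tau> * (\<Sum>l\<in>{s..<m}. G l)"
    using sum.atLeastLessThan_concat[of "s - \<tau>" s m G] assms by (simp add: sum_distrib_left[symmetric] distrib_left[symmetric])
  finally show ?thesis by simp
qed

lemma block:
  assumes "s \<le> m" "m \<le> N"
  shows "E m \<le> E s - (1 - 2 * \<rho> * \<tau>) * (\<Sum>j\<in>{s..<m}. G j) + \<rho> * \<tau> * (\<Sum>l\<in>{s - \<tau>..<s}. G l)"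
proof -
  have "\<rho> * (\<Sum>j\<in>{s..<m}. \<Sum>l\<in>{k j..<j}. G l) \<le> \<rho> * (\<tau> * (\<Sum>l\<in>{s..<m}. G l) + \<tau> * (\<Sum>l\<in>{s - \<tau>..<s}. G l))"
    using dsum[OF assms(1)] rho by (rule mult_left_mono)
  then show ?thesis using summed[OF assms] by (simp add: algebra_simps)
qed

lemma Epow: "i \<le> j \<Longrightarrow> j \<le> N \<Longrightarrow> q ^ (j - i) * E i \<le> E j"
proof (induction j)
  case 0 then show ?case by simp
next
  case (Suc j)
  show ?case
  proof (cases "i = Suc j")
    case True then show ?thesis by simp
  next
    case False
    then have ij: "i \<le> j" "j < N" using Suc.prems by auto
    have q0: "q \<ge> 0" using Clt by simp
    have "q ^ (Suc j - i) * E i = q * (q ^ (j - i) * E i)" using ij by (simp add: Suc_diff_le)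
    also have "\<dots> \<le> q * E j" using Suc.IH ij q0 by (intro mult_left_mono) auto
    also have "\<dots> \<le> E (Suc j)" using R4[OF ij(2)] by simp
    finally show ?thesis .
  qed
qed

lemma geo: "(\<Sum>t<T. q ^ t) = (1 - q ^ T) / C"
  using Cpos by (simp add: sum_gp_strict)

lemma partA:
  assumes "m \<le> N" "q ^ m \<le> 1/2"
  shows "(\<Sum>j<m. G j) \<ge> c / (2 * C) * E 0"
proof -
  have "(\<Sum>j<m. c * (q ^ j * E 0)) \<le> (\<Sum>j<m. G j)"
  proof (intro sum_mono)
    fix j assume j: "j \<in> {..<m}"
    have "q ^ j * E 0 \<le> q ^ (k j) * E 0"
      using kle[of j] Clt Cpos Enn[of 0] by (intro mult_right_mono power_decreasing) auto
    also have "\<dots> \<le> E (k j)" using Epow[of 0 "k j"] kle[of j] j assms(1) by simp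
    finally have "q ^ j * E 0 \<le> E (k j)" .
    then have "c * (q ^ j * E 0) \<le> c * E (k j)" using cnn by (rule mult_left_mono)
    moreover have "c * E (k j) \<le> G j" using R2 j assms(1) by auto
    ultimately show "c * (q ^ j * E 0) \<le> G j" by linarith
  qed
  also have "(\<Sum>j<m. c * (q ^ j * E 0)) = c * E 0 * (1 - q ^ m) / C"
    by (simp add: sum_distrib_left[symmetric] sum_distrib_right[symmetric] geo algebra_simps)
  finally have "c * E 0 * (1 - q ^ m) / C \<le> (\<Sum>j<m. G j)" .
  moreover have "c / (2 * C) * E 0 \<le> c * E 0 * (1 - q ^ m) / C"
  proof -
    have "c * E 0 * (1/2) \<le> c * E 0 * (1 - q ^ m)"
      using assms(2) cnn Enn[of 0] by (intro mult_left_mono) auto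
    then show ?thesis using Cpos by (simp add: divide_right_mono field_simps)
  qed
  ultimately show ?thesis by linarith
qed


lemma partB:
  assumes mN: "s + \<tau> + T0 \<le> N" and qT: "q ^ T0 \<le> 1/2" and nu: "1 - 2 * \<rho> * \<tau> \<ge> 0"
  shows "E (s + \<tau> + T0) \<le> (1 - (1 - 2 * \<rho> * \<tau>) * q ^ \<tau> * c / (2 * C) + \<rho> * \<tau>^2 * C / q ^ (2 * \<tau>)) * E s"
proof -
  let ?m = "s + \<tau> + T0"
  let ?\<nu> = "1 - 2 * \<rho> * \<tau>"
  have q0: "q > 0" "q \<le> 1" using Clt Cpos by auto
  have Es: "E s \<ge> 0" by (rule Enn)
  have blk: "E ?m \<le> E s - ?\<nu> * (\<Sum>j\<in>{s..<?m}. G j) + \<rho> * \<tau> * (\<Sum>l\<in>{s - \<tau>..<s}. G l)"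
    by (rule block) (use mN in auto)
  have low1: "(\<Sum>t<T0. G (s + \<tau> + t)) \<le> (\<Sum>j\<in>{s..<?m}. G j)"
  proof -
    have "(\<Sum>t<T0. G (s + \<tau> + t)) = (\<Sum>j\<in>(\<lambda>t. s + \<tau> + t) ` {..<T0}. G j)"
      by (rule sum.reindex[symmetric, unfolded comp_def]) (simp add: inj_on_def)
    also have "\<dots> \<le> (\<Sum>j\<in>{s..<?m}. G j)"
      by (rule sum_mono2) (auto simp: Gnn)
    finally show ?thesis .
  qed
  have low2: "c * (q ^ (\<tau> + t) * E s) \<le> G (s + \<tau> + t)" if t: "t < T0" for t
  proof -
    let ?j = "s + \<tau> + t"
    have kj: "s \<le> k ?j" "k ?j \<le> ?j" using kge[of ?j] kle[of ?j] by auto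
    have "q ^ (\<tau> + t) * E s \<le> q ^ (k ?j - s) * E s"
      using kj q0 Es by (intro mult_right_mono power_decreasing) auto
    also have "\<dots> \<le> E (k ?j)" using Epow[of s "k ?j"] kj mN t by simp
    finally have "c * (q ^ (\<tau> + t) * E s) \<le> c * E (k ?j)" using cnn by (rule mult_left_mono)
    also have "\<dots> \<le> G ?j" using R2[of ?j] mN t by simp
    finally show ?thesis .
  qed
  have "(\<Sum>t<T0. c * (q ^ (\<tau> + t) * E s)) = c * q ^ \<tau> * E s * (1 - q ^ T0) / C"
    by (simp add: power_add sum_distrib_left[symmetric] sum_distrib_right[symmetric] geo algebra_simps)
  also have "\<dots> \<ge> c * q ^ \<tau> * E s / (2 * C)"
  proof -
    have "c * q ^ \<tau> * E s * (1/2) \<le> c * q ^ \<tau> * E s * (1 - q ^ T0)"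
      using qT cnn Es q0 by (intro mult_left_mono) auto
    then show ?thesis using Cpos by (simp add: field_simps)
  qed
  finally have low0: "c * q ^ \<tau> * E s / (2 * C) \<le> (\<Sum>t<T0. c * (q ^ (\<tau> + t) * E s))" .
  have "(\<Sum>t<T0. c * (q ^ (\<tau> + t) * E s)) \<le> (\<Sum>t<T0. G (s + \<tau> + t))"
    by (rule sum_mono) (use low2 in auto)
  then have low: "c * q ^ \<tau> * E s / (2 * C) \<le> (\<Sum>j\<in>{s..<?m}. G j)"
    using low0 low1 by linarith
  have up1: "G l \<le> C * E s / q ^ (2 * \<tau>)" if l: "l \<in> {s - \<tau>..<s}" for l
  proof -
    have kl: "k l \<le> s" "s - k l \<le> 2 * \<tau>" using l kge[of l] kle[of l] by auto
    have "q ^ (2 * \<tau>) * E (k l) \<le> q ^ (s - k l) * E (k l)"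
      using kl q0 Enn by (intro mult_right_mono power_decreasing) auto
    also have "\<dots> \<le> E s" using Epow[of "k l" s] kl mN by simp
    finally have "E (k l) \<le> E s / q ^ (2 * \<tau>)" using q0 by (simp add: field_simps)
    moreover have "G l \<le> C * E (k l)" using R3[of l] l mN by simp
    ultimately show ?thesis using Cpos by (smt (verit) mult_left_mono times_divide_eq_right)
  qed
  have "(\<Sum>l\<in>{s - \<tau>..<s}. G l) \<le> (\<Sum>l\<in>{s - \<tau>..<s}. C * E s / q ^ (2 * \<tau>))"
    by (rule sum_mono) (rule up1)
  also have "\<dots> = real (card {s - \<tau>..<s}) * (C * E s / q ^ (2 * \<tau>))" by simp
  also have "\<dots> \<le> \<tau> * (C * E s / q ^ (2 * \<tau>))"
    using Cpos Es q0 by (intro mult_right_mono) auto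
  finally have up: "\<rho> * \<tau> * (\<Sum>l\<in>{s - \<tau>..<s}. G l) \<le> \<rho> * \<tau> * (\<tau> * (C * E s / q ^ (2 * \<tau>)))"
    using rho by (intro mult_left_mono) auto
  have "?\<nu> * (c * q ^ \<tau> * E s / (2 * C)) \<le> ?\<nu> * (\<Sum>j\<in>{s..<?m}. G j)"
    using low nu by (rule mult_left_mono)
  then have "E ?m \<le> E s - ?\<nu> * (c * q ^ \<tau> * E s / (2 * C)) + \<rho> * \<tau> * (\<tau> * (C * E s / q ^ (2 * \<tau>)))"
    using blk up by linarith
  then show ?thesis by (simp add: algebra_simps power2_eq_square)
qed

end

locale mainl = crs A b x0 k \<tau> + spdA A
  for A :: "real^'n^'n" and b x0 k \<tau>
begin


definition EN :: "nat \<Rightarrow> nat \<Rightarrow> real" where "EN N j = SE N j / real CARD('n) ^ N"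
definition GN :: "nat \<Rightarrow> nat \<Rightarrow> real" where "GN N j = SG N j / real CARD('n) ^ N"

lemma nn_pos: "real CARD('n) > 0" by simp

lemma cr_err_EN: "j \<le> N \<Longrightarrow> cr_err A b x0 1 k j = EN N j"
proof -
  assume jN: "j \<le> N"
  have "cr_err A b x0 1 k j = measure_pmf.expectation (dir_pmf j) (\<lambda>d. Q (e d j))"
    unfolding cr_err_def A_norm_sq_def A_inner_def Q_def e_def by simp
  also have "\<dots> = measure_pmf.expectation (dir_pmf N) (\<lambda>d. Q (e d j))"
    by (rule marg[OF jN]) (metis e_dep)
  also have "\<dots> = EN N j" unfolding exp_dir EN_def SE_def ..
  finally show ?thesis .
qed

lemma Q_nonneg: "Q v \<ge> 0" unfolding Q_def by (rule psdA)

lemma seqs_N: "seqs (EN N) (GN N) k \<tau> N (inf_norm A / real CARD('n)) (lam_min A / real CARD('n)) (lam_max A / real CARD('n))"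
proof (unfold_locales)
  show "\<forall>j. j - \<tau> \<le> k j \<and> k j \<le> j" by (rule delay)
next
  fix j assume j: "j < N"
  show "EN N (Suc j) \<le> EN N j - GN N j + (\<Sum>l\<in>{k j..<j}. inf_norm A / real CARD('n) * (GN N j + GN N l))"
    using divide_right_mono[OF R1[OF j], of "real CARD('n) ^ N"]
    unfolding EN_def GN_def by (simp add: sum_divide_distrib add_divide_distrib diff_divide_distrib algebra_simps)
next
  fix j assume j: "j < N"
  have kj: "k j < N" using kle[of j] j by simp
  have "lam_min A / real CARD('n) * SE N (k j) = (\<Sum>d\<in>PS N. lam_min A * Q (e d (k j)) / real CARD('n))"
    unfolding SE_def by (simp add: sum_distrib_left sum_divide_distrib)
  also have "\<dots> \<le> (\<Sum>d\<in>PS N. (norm (A *v e d (k j)))\<^sup>2 / real CARD('n))"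
    unfolding Q_def by (intro sum_mono divide_right_mono Anorm_lower) simp
  also have "\<dots> = SG N j" unfolding SG_def using S3[OF j] by simp
  finally have "lam_min A / real CARD('n) * SE N (k j) / real CARD('n) ^ N \<le> SG N j / real CARD('n) ^ N"
    by (rule divide_right_mono) simp
  then show "lam_min A / real CARD('n) * EN N (k j) \<le> GN N j"
    unfolding EN_def GN_def times_divide_eq_right .
next
  fix j assume j: "j < N"
  have "SG N j = (\<Sum>d\<in>PS N. (norm (A *v e d (k j)))\<^sup>2 / real CARD('n))" unfolding SG_def using S3[OF j] by simp
  also have "\<dots> \<le> (\<Sum>d\<in>PS N. lam_max A * Q (e d (k j)) / real CARD('n))"
    unfolding Q_def by (intro sum_mono divide_right_mono Anorm_upper) simp
  also have "\<dots> = lam_max A / real CARD('n) * SE N (k j)"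
    unfolding SE_def by (simp add: sum_distrib_left sum_divide_distrib)
  finally have "SG N j / real CARD('n) ^ N \<le> lam_max A / real CARD('n) * SE N (k j) / real CARD('n) ^ N"
    by (rule divide_right_mono) simp
  then show "GN N j \<le> lam_max A / real CARD('n) * EN N (k j)"
    unfolding EN_def GN_def times_divide_eq_right .
next
  fix j assume j: "j < N"
  have ss: "(\<Sum>d\<in>PS N. lam_max A * Q (e d j) / real CARD('n)) = lam_max A / real CARD('n) * SE N j"
    unfolding SE_def by (simp add: sum_distrib_left)
  have "(1 - lam_max A / real CARD('n)) * SE N j = SE N j - (\<Sum>d\<in>PS N. lam_max A * Q (e d j) / real CARD('n))"
    unfolding ss by (simp add: algebra_simps)
  also have "\<dots> \<le> SE N j - (\<Sum>d\<in>PS N. (norm (A *v e d j))\<^sup>2 / real CARD('n))"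
    unfolding Q_def by (intro diff_left_mono sum_mono divide_right_mono Anorm_upper) simp
  also have "\<dots> \<le> SE N (Suc j)" by (rule R4[OF j])
  finally have "(1 - lam_max A / real CARD('n)) * SE N j / real CARD('n) ^ N \<le> SE N (Suc j) / real CARD('n) ^ N"
    by (rule divide_right_mono) simp
  then show "(1 - lam_max A / real CARD('n)) * EN N j \<le> EN N (Suc j)"
    unfolding EN_def times_divide_eq_right .
next
  fix j show "0 \<le> EN N j" unfolding EN_def SE_def by (intro divide_nonneg_pos sum_nonneg Q_nonneg) auto
next
  fix j show "0 \<le> GN N j" unfolding GN_def SG_def by (intro divide_nonneg_pos sum_nonneg) auto
next
  show "0 \<le> inf_norm A / real CARD('n)"
    using rowsum_le[of undefined] by (intro divide_nonneg_pos) (auto intro: order_trans[OF sum_nonneg])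
next
  show "0 \<le> lam_min A / real CARD('n)" using lmin_pos by simp
next
  show "0 < lam_max A / real CARD('n)" using lmax_ge1 by simp
next
  show "lam_max A / real CARD('n) < 1" using lmax_lt by simp
qed

end


lemma qpow:
  fixes q :: real
  assumes "0 < q" "q < 1" "real m \<ge> ln (1/2) / ln q"
  shows "q ^ m \<le> 1/2"
proof -
  have lq: "ln q < 0" using assms by simp
  have "real m * ln q \<le> ln (1/2)" using assms(3) lq by (simp add: neg_divide_le_eq)
  then have "ln (q ^ m) \<le> ln (1/2)" using assms by (simp add: ln_realpow)
  then show ?thesis using assms by (simp add: ln_le_cancel_iff)
qed

theorem theorem1:
  fixes A :: "real^'n^'n" and b x0 :: "real^'n" and \<tau> :: nat and k :: "nat \<Rightarrow> nat"
  assumes n2: "CARD('n) \<ge> 2"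
    and spdA: "spd A"
    and diag: "\<forall>i. A $ i $ i = 1"
    and delay: "\<forall>j. j - \<tau> \<le> k j \<and> k j \<le> j"
    and small: "2 * (inf_norm A / real CARD('n)) * real \<tau> < 1"
  shows
   "(let n = real CARD('n); lmax = lam_max A; \<kappa> = lam_max A / lam_min A;
         \<rho> = inf_norm A / n; \<nu> = 1 - 2 * \<rho> * real \<tau>;
         E = cr_err A b x0 1 k;
         T0 = nat \<lceil>ln (1/2) / ln (1 - lmax / n)\<rceil>; T = T0 + \<tau>;
         chi = \<rho> * real \<tau>^2 * lmax / (1 - lmax / n)^(2*\<tau>) / n
     in (\<forall>m::nat. real m \<ge> ln (1/2) / ln (1 - lmax / n) \<longrightarrow>
            E m \<le> (1 - \<nu> / (2 * \<kappa>)) * E 0)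
      \<and> (\<forall>r m::nat. r \<ge> 1 \<longrightarrow> m \<ge> r * T \<longrightarrow>
            E m \<le> (1 - \<nu> / (2 * \<kappa>))
                   * (1 - \<nu> * (1 - lmax / n)^\<tau> / (2 * \<kappa>) + chi)^(r - 1) * E 0))"
proof -
  interpret M: mainl A b x0 k \<tau>
    by unfold_locales (use spdA diag delay n2 in \<open>auto simp: spd_def\<close>)
  define n where "n = real CARD('n)"
  define L where "L = lam_max A"
  define l where "l = lam_min A"
  define \<kappa> where "\<kappa> = lam_max A / lam_min A"
  define \<rho> where "\<rho> = inf_norm A / n"
  define \<nu> where "\<nu> = 1 - 2 * \<rho> * real \<tau>"
  define q where "q = 1 - L / n"
  define E where "E = cr_err A b x0 1 k"
  define T0 where "T0 = nat \<lceil>ln (1/2) / ln q\<rceil>"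
  define chi where "chi = \<rho> * real \<tau>^2 * L / q^(2*\<tau>) / n"
  define f1 where "f1 = 1 - \<nu> / (2 * \<kappa>)"
  define f2 where "f2 = 1 - \<nu> * q^\<tau> / (2 * \<kappa>) + chi"
  have npos: "n > 0" unfolding n_def by simp
  have L1: "1 \<le> L" unfolding L_def by (rule M.lmax_ge1)
  have Llt: "L < n" unfolding L_def n_def by (rule M.lmax_lt)
  have lpos: "l > 0" unfolding l_def by (rule M.lmin_pos)
  have lle: "l \<le> L" unfolding l_def L_def by (rule M.lmin_le_lmax)
  have q0: "0 < q" "q < 1" unfolding q_def using L1 Llt npos by (auto simp: field_simps)
  have rho0: "\<rho> \<ge> 0"
    unfolding \<rho>_def n_def using M.rowsum_le[of undefined] by (intro divide_nonneg_pos) (auto intro: order_trans[OF sum_nonneg])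
  have nu0: "\<nu> \<ge> 0" using small unfolding \<nu>_def \<rho>_def n_def by simp
  have nu1: "\<nu> \<le> 1" using rho0 unfolding \<nu>_def by simp
  have kappa: "\<kappa> = L / l" unfolding \<kappa>_def L_def l_def ..
  have ckey: "(l / n) / (2 * (L / n)) = 1 / (2 * \<kappa>)" unfolding kappa using npos lpos L1 by (simp add: field_simps)
  have Eeq: "E j = M.EN N j" if "j \<le> N" for j N unfolding E_def using M.cr_err_EN[OF that] .
  have qm: "q ^ m \<le> 1/2" if "real m \<ge> ln (1/2) / ln q" for m using qpow[OF q0 that] .
  have partA: "E m \<le> f1 * E 0" if m: "real m \<ge> ln (1/2) / ln q" for m
  proof -
    interpret S: seqs "M.EN m" "M.GN m" k \<tau> m "inf_norm A / real CARD('n)" "lam_min A / real CARD('n)" "lam_max A / real CARD('n)"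
      by (rule M.seqs_N)
    have sA: "(\<Sum>j<m. M.GN m j) \<ge> (l / n) / (2 * (L / n)) * M.EN m 0"
      using S.partA[of m] qm[OF m] unfolding q_def L_def l_def n_def by simp
    have blk: "M.EN m m \<le> M.EN m 0 - \<nu> * (\<Sum>j\<in>{0..<m}. M.GN m j)"
      using S.block[of 0 m] unfolding \<nu>_def \<rho>_def n_def by simp
    have "\<nu> * ((l / n) / (2 * (L / n)) * M.EN m 0) \<le> \<nu> * (\<Sum>j<m. M.GN m j)"
      using sA nu0 by (rule mult_left_mono)
    then have "M.EN m m \<le> M.EN m 0 - \<nu> * (1 / (2 * \<kappa>)) * M.EN m 0"
      using blk unfolding ckey by (simp add: atLeast0LessThan)
    then show ?thesis using Eeq[of m m] Eeq[of 0 m] unfolding f1_def by (simp add: algebra_simps)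
  qed
  have T0ge: "real T0 \<ge> ln (1/2) / ln q" unfolding T0_def by linarith
  have qT0: "q ^ T0 \<le> 1/2" by (rule qm[OF T0ge])
  have chi0: "chi \<ge> 0" unfolding chi_def using rho0 L1 q0 npos by simp
  have kappa1: "\<kappa> \<ge> 1" unfolding kappa using lpos lle by simp
  have f2pos: "f2 \<ge> 0"
  proof -
    have "\<nu> * q^\<tau> \<le> 1 * 1" using nu0 nu1 q0 by (intro mult_mono power_le_one) auto
    then have "\<nu> * q^\<tau> / (2 * \<kappa>) \<le> 1 / (2 * \<kappa>)" using kappa1 by (intro divide_right_mono) auto
    also have "\<dots> \<le> 1" using kappa1 by simp
    finally show ?thesis unfolding f2_def using chi0 by simp
  qed
  have blockB: "E (s + \<tau> + T0) \<le> f2 * E s" for s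
  proof -
    let ?m = "s + \<tau> + T0"
    interpret S: seqs "M.EN ?m" "M.GN ?m" k \<tau> ?m "inf_norm A / real CARD('n)" "lam_min A / real CARD('n)" "lam_max A / real CARD('n)"
      by (rule M.seqs_N)
    have "M.EN ?m ?m \<le> (1 - \<nu> * q ^ \<tau> * (l / n) / (2 * (L / n)) + \<rho> * \<tau>^2 * (L / n) / q ^ (2 * \<tau>)) * M.EN ?m s"
      using S.partB[of s T0] qT0 nu0 unfolding q_def L_def l_def n_def \<nu>_def \<rho>_def by simp
    also have "(1 - \<nu> * q ^ \<tau> * (l / n) / (2 * (L / n)) + \<rho> * \<tau>^2 * (L / n) / q ^ (2 * \<tau>)) = f2"
      unfolding f2_def chi_def kappa using npos q0 lpos L1 by (simp add: field_simps)
    finally show ?thesis using Eeq[of ?m ?m] Eeq[of s ?m] by simp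
  qed
  have partB: "E m \<le> f1 * f2 ^ (r - 1) * E 0" if "1 \<le> r" "r * (T0 + \<tau>) \<le> m" for r m
    using that
  proof (induction r arbitrary: m)
    case 0 then show ?case by simp
  next
    case (Suc r)
    show ?case
    proof (cases "r = 0")
      case True
      then have "real m \<ge> real T0" using Suc.prems by simp
      then have "real m \<ge> ln (1/2) / ln q" using T0ge by linarith
      then show ?thesis using partA True by simp
    next
      case False
      define s where "s = m - (T0 + \<tau>)"
      have ms: "m = s + \<tau> + T0" using Suc.prems unfolding s_def by simp
      have IH: "E s \<le> f1 * f2 ^ (r - 1) * E 0"
        using Suc.IH[of s] False Suc.prems unfolding s_def by (simp add: algebra_simps)
      have "E m \<le> f2 * E s" unfolding ms by (rule blockB)
      also have "\<dots> \<le> f2 * (f1 * f2 ^ (r - 1) * E 0)" using IH f2pos by (rule mult_left_mono)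
      also have "\<dots> = f1 * f2 ^ (Suc r - 1) * E 0" using False
        by (cases r) (simp_all add: algebra_simps)
      finally show ?thesis .
    qed
  qed
  show ?thesis
    unfolding Let_def
    using partA partB
    unfolding f1_def f2_def chi_def T0_def E_def \<kappa>_def \<nu>_def \<rho>_def q_def L_def n_def
    by blast
qed

end
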